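(* For the spheroid geodesic system with Lagrangian $\mathcal L=\tfrac12\big(\sin^2\theta\,\dot\phi^2+(\cos^2\theta+R^2\sin^2\theta)\dot\theta^2\big)$ ($R>0$, $R\neq1$), let $L=\sin^2\theta\,\dot\phi$, $E=\mathcal L$, $C=2E/L^2$, $s=\mathrm{sgn}(\dot\theta)\mathrm{sgn}(L)$, and let $\Theta=\phi-s\,\mathcal A(\theta;C)$ and $T=t-s\,L^{-1}\mathcal B(\theta;C)$, where $$\mathcal A(\theta;C)=\int_{\theta_*}^{\theta}\sqrt{\frac{\cot^2\vartheta+R^2}{C\sin^2\vartheta-1}}\,d\vartheta,\qquad \mathcal B(\theta;C)=\int_{\theta_*}^{\theta}\sqrt{\frac{\cos^2\vartheta+R^2\sin^2\vartheta}{C\sin^2\vartheta-1}}\,\sin\vartheta\,d\vartheta,\qquad \theta_*=\arcsin(1/\sqrt C).$$ Then, with respect to the Poisson bracket, on the region where these functions are smooth, $$\{E,L\}=0,\quad \{E,\Theta\}=0,\quad \{E,T\}=1,\quad \{L,\Theta\}=-1,\quad \{L,T\}=0,\quad \{\Theta,T\}=0 .$$ Consequently the four corresponding Noether (variational) symmetries, obtained from these conserved integrals, mutually commute, i.e. span a four-dimensional abelian Lie algebra. *)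

theory Defs
  imports "HOL-Analysis.Analysis"
begin

text \<open>Configuration coordinates (phi, theta), canonical
momenta (pphi, ptheta) obtained by the Legendre transform of the Lagrangian
  Lag = 1/2 (sin^2 theta phidot^2 + (cos^2 theta + R^2 sin^2 theta) thetadot^2).
Phase-space observables may depend explicitly on time t; they are functions
of (t, phi, theta, pphi, ptheta).\<close>

definition gmet :: "real \<Rightarrow> real \<Rightarrow> real" where
  "gmet R \<theta> = cos \<theta> ^ 2 + R ^ 2 * sin \<theta> ^ 2"

definition lagr :: "real \<Rightarrow> real \<Rightarrow> real \<Rightarrow> real \<Rightarrow> real" where
  "lagr R \<theta> vphi vtheta = 1/2 * (sin \<theta> ^ 2 * vphi ^ 2 + gmet R \<theta> * vtheta ^ 2)"

text \<open>Velocities in terms of momenta (inverse Legendre transform):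
 pphi = sin^2 theta phidot, ptheta = gmet theta thetadot.\<close>
definition phidot :: "real \<Rightarrow> real \<Rightarrow> real" where
  "phidot \<theta> pphi = pphi / sin \<theta> ^ 2"

definition thetadot :: "real \<Rightarrow> real \<Rightarrow> real \<Rightarrow> real" where
  "thetadot R \<theta> ptheta = ptheta / gmet R \<theta>"

type_synonym obs = "real \<Rightarrow> real \<Rightarrow> real \<Rightarrow> real \<Rightarrow> real \<Rightarrow> real"

definition Eobs :: "real \<Rightarrow> obs" where
  "Eobs R = (\<lambda>t \<phi> \<theta> pphi ptheta. lagr R \<theta> (phidot \<theta> pphi) (thetadot R \<theta> ptheta))"

definition Lobs :: "obs" where
  "Lobs = (\<lambda>t \<phi> \<theta> pphi ptheta. sin \<theta> ^ 2 * phidot \<theta> pphi)"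

definition Cobs :: "real \<Rightarrow> obs" where
  "Cobs R = (\<lambda>t \<phi> \<theta> pphi ptheta.
      2 * Eobs R t \<phi> \<theta> pphi ptheta / (Lobs t \<phi> \<theta> pphi ptheta) ^ 2)"

definition sobs :: "real \<Rightarrow> obs" where
  "sobs R = (\<lambda>t \<phi> \<theta> pphi ptheta.
      sgn (thetadot R \<theta> ptheta) * sgn (Lobs t \<phi> \<theta> pphi ptheta))"

definition thetastar :: "real \<Rightarrow> real" where
  "thetastar C = arcsin (1 / sqrt C)"

definition Aint :: "real \<Rightarrow> real \<Rightarrow> real \<Rightarrow> real" where
  "Aint R \<theta> C = integral {thetastar C..\<theta>}
      (\<lambda>v. sqrt ((cot v ^ 2 + R ^ 2) / (C * sin v ^ 2 - 1)))"

definition Bint :: "real \<Rightarrow> real \<Rightarrow> real \<Rightarrow> real" where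
  "Bint R \<theta> C = integral {thetastar C..\<theta>}
      (\<lambda>v. sqrt ((cos v ^ 2 + R ^ 2 * sin v ^ 2) / (C * sin v ^ 2 - 1)) * sin v)"

definition Thetaobs :: "real \<Rightarrow> obs" where
  "Thetaobs R = (\<lambda>t \<phi> \<theta> pphi ptheta.
      \<phi> - sobs R t \<phi> \<theta> pphi ptheta * Aint R \<theta> (Cobs R t \<phi> \<theta> pphi ptheta))"

definition Tobs :: "real \<Rightarrow> obs" where
  "Tobs R = (\<lambda>t \<phi> \<theta> pphi ptheta.
      t - sobs R t \<phi> \<theta> pphi ptheta * inverse (Lobs t \<phi> \<theta> pphi ptheta)
          * Bint R \<theta> (Cobs R t \<phi> \<theta> pphi ptheta))"

definition d_phi :: "obs \<Rightarrow> obs" where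
  "d_phi f = (\<lambda>t \<phi> \<theta> a b. deriv (\<lambda>x. f t x \<theta> a b) \<phi>)"
definition d_theta :: "obs \<Rightarrow> obs" where
  "d_theta f = (\<lambda>t \<phi> \<theta> a b. deriv (\<lambda>x. f t \<phi> x a b) \<theta>)"
definition d_pphi :: "obs \<Rightarrow> obs" where
  "d_pphi f = (\<lambda>t \<phi> \<theta> a b. deriv (\<lambda>x. f t \<phi> \<theta> x b) a)"
definition d_ptheta :: "obs \<Rightarrow> obs" where
  "d_ptheta f = (\<lambda>t \<phi> \<theta> a b. deriv (\<lambda>x. f t \<phi> \<theta> a x) b)"

definition poisson :: "obs \<Rightarrow> obs \<Rightarrow> obs" where
  "poisson f g = (\<lambda>t \<phi> \<theta> a b.
      d_phi f t \<phi> \<theta> a b * d_pphi g t \<phi> \<theta> a b - d_pphi f t \<phi> \<theta> a b * d_phi g t \<phi> \<theta> a b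
    + d_theta f t \<phi> \<theta> a b * d_ptheta g t \<phi> \<theta> a b - d_ptheta f t \<phi> \<theta> a b * d_theta g t \<phi> \<theta> a b)"

end

theory Submission
  imports Defs
begin

lemma II_has_derivative:
  fixes F dF :: "real \<Rightarrow> real \<Rightarrow> real"
  assumes contF: "continuous_on ({1<..} \<times> {-pi/2..pi/2}) (\<lambda>(c,w). F c w)"
  and dF: "\<And>c w. c > 1 \<Longrightarrow> ((\<lambda>c. F c w) has_field_derivative dF c w) (at c)"
  and contdF: "continuous_on ({1<..} \<times> {-pi/2..pi/2}) (\<lambda>(c,w). dF c w)"
  and c0: "c0 > 1" and a0: "-pi/2 < a0" "a0 < pi/2"
  shows "((\<lambda>(c,a). integral {a..pi/2} (F c)) has_derivative
     (\<lambda>(dc,da). integral {a0..pi/2} (dF c0) * dc - F c0 a0 * da)) (at (c0,a0))"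
proof -
  let ?X = "{1::real<..}" and ?Y = "{-pi/2<..<pi/2::real}"
  have contFc: "continuous_on {-pi/2..pi/2} (F c)" if "c > 1" for c
    by (rule continuous_on_compose2[OF contF, where f="\<lambda>w. (c,w)", simplified])
       (auto intro!: continuous_intros simp: that)
  have sub: "{a0..pi/2} \<subseteq> {-pi/2..pi/2}" using a0 by auto
  have fx: "((\<lambda>c. integral {a0..pi/2} (F c)) has_derivative (\<lambda>dc. integral {a0..pi/2} (dF c0) * dc)) (at c0 within ?X)"
  proof -
    have "((\<lambda>c. integral (cbox a0 (pi/2)) (F c)) has_field_derivative integral (cbox a0 (pi/2)) (dF c0)) (at c0 within ?X)"
    proof (rule leibniz_rule_field_derivative)
      show "((\<lambda>x. F x t) has_field_derivative dF x t) (at x within ?X)" if "x \<in> ?X" "t \<in> cbox a0 (pi/2)" for x t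
        using dF[of x t] that by (auto intro: has_field_derivative_at_within)
      show "F x integrable_on cbox a0 (pi / 2)" if "x \<in> ?X" for x
        using contFc[of x] that sub by (auto intro!: integrable_continuous_real intro: continuous_on_subset)
      show "continuous_on (?X \<times> cbox a0 (pi / 2)) (\<lambda>(x, t). dF x t)"
        using contdF sub by (auto intro: continuous_on_subset)
    qed (use c0 in auto)
    then show ?thesis by (simp add: has_field_derivative_def)
  qed
  have fy: "((\<lambda>a. integral {a..pi/2} (F c)) has_derivative blinfun_apply (blinfun_mult_left (- F c a))) (at a within ?Y)"
    if "c \<in> ?X" "a \<in> ?Y" for c a
  proof -
    have "((\<lambda>a. integral {a..pi/2} (F c)) has_real_derivative - F c a) (at a within {-pi/2..pi/2})"
      by (rule integral_has_real_derivative') (use that contFc in auto)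
    then have "((\<lambda>a. integral {a..pi/2} (F c)) has_real_derivative - F c a) (at a within ?Y)"
      by (rule has_field_derivative_subset) auto
    then show ?thesis unfolding has_field_derivative_def
      by (rule has_derivative_eq_rhs) (auto simp: fun_eq_iff)
  qed
  have cont: "continuous (at (c0, a0) within ?X \<times> ?Y) (\<lambda>(c, a). blinfun_mult_left (- F c a))"
  proof -
    have "continuous (at (c0, a0) within ?X \<times> ?Y) (\<lambda>(c, a). F c a)"
    proof -
      have "continuous_on (?X \<times> ?Y) (\<lambda>(c, a). F c a)"
        by (rule continuous_on_subset[OF contF]) auto
      then show ?thesis using c0 a0
        by (simp add: continuous_on_eq_continuous_within)
    qed
    then have "continuous (at (c0, a0) within ?X \<times> ?Y) (\<lambda>x. - (\<lambda>(c, a). F c a) x)"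
      by (intro continuous_intros)
    from bounded_linear.continuous[OF bounded_linear_blinfun_mult_left this]
    show ?thesis by (simp add: case_prod_beta')
  qed
  have "((\<lambda>(c,a). integral {a..pi/2} (F c)) has_derivative
     (\<lambda>(tx,ty). integral {a0..pi/2} (dF c0) * tx + blinfun_apply (blinfun_mult_left (- F c0 a0)) ty)) (at (c0,a0) within ?X \<times> ?Y)"
    by (rule has_derivative_partialsI[OF fx fy cont]) (use a0 in auto)
  moreover have "at (c0,a0) within ?X \<times> ?Y = at (c0,a0)"
    by (rule at_within_open) (use c0 a0 in \<open>auto intro!: open_Times\<close>)
  ultimately show ?thesis
    by (auto elim!: has_derivative_eq_rhs simp: fun_eq_iff)
qed

definition k2 :: "real \<Rightarrow> real" where "k2 c = 1 - 1/c"
definition w0 :: "real \<Rightarrow> real \<Rightarrow> real" where "w0 x c = arcsin (cos x / sqrt (k2 c))"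

lemma k2_bounds: "1 < c \<Longrightarrow> 0 < k2 c \<and> k2 c < 1"
  by (auto simp: k2_def field_simps)

lemma k2_has_derivative[derivative_intros]:
  assumes "(g has_derivative g') (at x within s)" "g x \<noteq> 0"
  shows "((\<lambda>x. k2 (g x)) has_derivative (\<lambda>h. g' h / (g x)^2)) (at x within s)"
  unfolding k2_def
  by (rule has_derivative_eq_rhs, (rule derivative_eq_intros assms refl)+) (use assms in \<open>auto simp: field_simps power2_eq_square\<close>)

lemma D_cond: assumes "1 < c * sin x ^ 2" shows "1 < c" "cos x ^ 2 < k2 c"
proof -
  have "sin x ^ 2 \<le> 1" using sin_cos_squared_add[of x] zero_le_power2[of "cos x"] by linarith
  show c: "1 < c"
  proof (rule ccontr)
    assume "\<not> 1 < c"
    then have "c * sin x ^ 2 \<le> 1" using \<open>sin x ^ 2 \<le> 1\<close>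
      by (cases "c \<le> 0") (auto intro: mult_nonpos_nonneg mult_le_one)
    then show False using assms by simp
  qed
  have "c * cos x ^ 2 = c - c * sin x ^ 2" using sin_cos_squared_add[of x] by algebra
  then have "c * cos x ^ 2 < c - 1" using assms by linarith
  then have "cos x ^ 2 < (c - 1) / c" using c by (simp add: field_simps)
  then show "cos x ^ 2 < k2 c" using c by (simp add: k2_def field_simps)
qed

lemma u_bounds: assumes "1 < c * sin x ^ 2" shows "-1 < cos x / sqrt (k2 c)" "cos x / sqrt (k2 c) < 1"
  "(cos x / sqrt (k2 c))^2 < 1"
proof -
  have k: "0 < k2 c" using D_cond[OF assms] k2_bounds by auto
  have h: "cos x ^2 < k2 c" using D_cond[OF assms] by auto
  show 3: "(cos x / sqrt (k2 c))^2 < 1" using k h by (simp add: power_divide)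
  then have "\<bar>cos x / sqrt (k2 c)\<bar> < 1" by (simp add: abs_square_less_1)
  then have "cos x / sqrt (k2 c) < 1 \<and> - (cos x / sqrt (k2 c)) < 1" by (simp only: abs_less_iff)
  then show "-1 < cos x / sqrt (k2 c)" "cos x / sqrt (k2 c) < 1" by linarith+
qed

lemma w0_deriv:
  assumes "1 < c0 * sin x0 ^ 2"
  shows "((\<lambda>z. w0 (fst z) (snd z)) has_derivative
     (\<lambda>dz. (- sin x0 / (sqrt (k2 c0) * cos (w0 x0 c0))) * fst dz
          + (- sin (w0 x0 c0) / (2 * c0 * (c0 - 1) * cos (w0 x0 c0))) * snd dz)) (at (x0,c0))"
proof -
  have c0: "1 < c0" and k: "0 < k2 c0" "k2 c0 < 1" using D_cond[OF assms] k2_bounds by auto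
  note u = u_bounds[OF assms]
  have cw: "cos (w0 x0 c0) = sqrt (1 - (cos x0 / sqrt (k2 c0))^2)"
    unfolding w0_def using u by (intro cos_arcsin) auto
  have sw: "sin (w0 x0 c0) = cos x0 / sqrt (k2 c0)"
    unfolding w0_def using u by simp
  have "((\<lambda>z. arcsin (cos (fst z) / sqrt (k2 (snd z)))) has_derivative
     (\<lambda>dz. (- sin x0 / (sqrt (k2 c0) * cos (w0 x0 c0))) * fst dz
          + (- sin (w0 x0 c0) / (2 * c0 * (c0 - 1) * cos (w0 x0 c0))) * snd dz)) (at (x0,c0))"
    apply (rule has_derivative_eq_rhs)
     apply (rule derivative_eq_intros | use u k c0 in \<open>simp; fail\<close>)+
  proof -
    define sk where "sk = sqrt (k2 c0)"
    have kk: "k2 c0 = (c0 - 1) / c0" using c0 by (simp add: k2_def field_simps)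
    have sk: "sk > 0" "sk * sk = (c0 - 1) / c0" using k c0 by (auto simp: sk_def kk[symmetric])
    have cpos: "cos (w0 x0 c0) > 0" unfolding cw using u(3) by simp
    show "(\<lambda>z. (- (cos x0 * (inverse (sqrt (k2 c0)) * (snd z * inverse (sqrt (k2 c0))) *
               inverse (sqrt (k2 c0))) / (c0\<^sup>2 * 2)) - fst z * sin x0 / sqrt (k2 c0)) *
          inverse (sqrt (1 - (cos x0 / sqrt (k2 c0))\<^sup>2))) =
     (\<lambda>dz. - sin x0 / (sqrt (k2 c0) * cos (w0 x0 c0)) * fst dz +
           - sin (w0 x0 c0) / (2 * c0 * (c0 - 1) * cos (w0 x0 c0)) * snd dz)"
      unfolding cw[symmetric] sw unfolding sk_def[symmetric]
    proof (rule ext)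
      fix z :: "real \<times> real"
      have e: "inverse sk * inverse sk = c0 / (c0 - 1)" using sk c0
        by (metis inverse_divide inverse_mult_distrib)
      have "(- (cos x0 * (inverse sk * (snd z * inverse sk) * inverse sk) / (c0\<^sup>2 * 2)) - fst z * sin x0 / sk) *
          inverse (cos (w0 x0 c0)) = (- (cos x0 * (inverse sk * inverse sk) * snd z * inverse sk / (c0\<^sup>2 * 2)) - fst z * sin x0 / sk) *
          inverse (cos (w0 x0 c0))" by (simp add: algebra_simps)
      also have "\<dots> = - sin x0 / (sk * cos (w0 x0 c0)) * fst z +
           - (cos x0 / sk) / (2 * c0 * (c0 - 1) * cos (w0 x0 c0)) * snd z"
        unfolding e using sk c0 cpos by (simp add: field_simps power2_eq_square)
      finally show "(- (cos x0 * (inverse sk * (snd z * inverse sk) * inverse sk) / (c0\<^sup>2 * 2)) - fst z * sin x0 / sk) *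
          inverse (cos (w0 x0 c0)) = - sin x0 / (sk * cos (w0 x0 c0)) * fst z +
           - (cos x0 / sk) / (2 * c0 * (c0 - 1) * cos (w0 x0 c0)) * snd z" .
    qed
  qed
  moreover have "(\<lambda>z. w0 (fst z) (snd z)) = (\<lambda>z. arcsin (cos (fst z) / sqrt (k2 (snd z))))"
    by (simp add: w0_def fun_eq_iff)
  ultimately show ?thesis by simp
qed

lemma Gt_deriv:
  fixes F dF :: "real \<Rightarrow> real \<Rightarrow> real"
  assumes contF: "continuous_on ({1<..} \<times> {-pi/2..pi/2}) (\<lambda>(c,w). F c w)"
  and dF: "\<And>c w. c > 1 \<Longrightarrow> ((\<lambda>c. F c w) has_field_derivative dF c w) (at c)"
  and contdF: "continuous_on ({1<..} \<times> {-pi/2..pi/2}) (\<lambda>(c,w). dF c w)"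
  and D: "1 < c0 * sin x0 ^ 2"
  shows "((\<lambda>z. integral {w0 (fst z) (snd z)..pi/2} (F (snd z)) / sqrt (snd z)) has_derivative
     (\<lambda>dz. (- F c0 (w0 x0 c0) * (- sin x0 / (sqrt (k2 c0) * cos (w0 x0 c0))) / sqrt c0) * fst dz
        + ((integral {w0 x0 c0..pi/2} (dF c0) - F c0 (w0 x0 c0) * (- sin (w0 x0 c0) / (2 * c0 * (c0 - 1) * cos (w0 x0 c0)))) / sqrt c0
           - integral {w0 x0 c0..pi/2} (F c0) / (2 * c0 * sqrt c0)) * snd dz)) (at (x0,c0))"
proof -
  have c0: "1 < c0" using D_cond[OF D] by auto
  note u = u_bounds[OF D]
  have a0: "-pi/2 < w0 x0 c0" "w0 x0 c0 < pi/2" unfolding w0_def using arcsin_lt_bounded[OF u(1,2)] by auto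
  let ?wx = "- sin x0 / (sqrt (k2 c0) * cos (w0 x0 c0))"
  let ?wc = "- sin (w0 x0 c0) / (2 * c0 * (c0 - 1) * cos (w0 x0 c0))"
  have inner: "((\<lambda>z. (snd z, w0 (fst z) (snd z))) has_derivative (\<lambda>dz. (snd dz, ?wx * fst dz + ?wc * snd dz))) (at (x0,c0))"
    by (intro has_derivative_Pair has_derivative_snd w0_deriv[OF D] has_derivative_ident)
  have outer: "((\<lambda>(c,a). integral {a..pi/2} (F c)) has_derivative
     (\<lambda>(dc,da). integral {w0 x0 c0..pi/2} (dF c0) * dc - F c0 (w0 x0 c0) * da)) (at (snd (x0,c0), w0 (fst (x0,c0)) (snd (x0,c0))))"
    using II_has_derivative[OF contF dF contdF c0 a0] by simp
  have ch: "((\<lambda>z. integral {w0 (fst z) (snd z)..pi/2} (F (snd z))) has_derivative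
     (\<lambda>dz. integral {w0 x0 c0..pi/2} (dF c0) * snd dz - F c0 (w0 x0 c0) * (?wx * fst dz + ?wc * snd dz))) (at (x0,c0))"
    using diff_chain_at[OF inner outer] by (simp add: o_def)
  show ?thesis
    apply (rule has_derivative_eq_rhs)
     apply (rule derivative_eq_intros ch | use c0 in \<open>simp; fail\<close>)+
  proof (rule ext)
    fix h :: "real \<times> real"
    have cw: "cos (w0 x0 c0) \<noteq> 0" unfolding w0_def using u(1,2) by (rule cos_arcsin_nonzero)
    have sk: "sqrt (k2 c0) \<noteq> 0" using k2_bounds[OF c0] by simp
    have e: "inverse (sqrt c0) * (snd h * inverse (sqrt c0)) * inverse (sqrt c0) = snd h / (c0 * sqrt c0)"
      using c0 by (simp add: field_simps)
    show "(integral {w0 x0 c0..pi / 2} (dF c0) * snd h -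
           F c0 (w0 x0 c0) * (- (sin x0 * fst h / (sqrt (k2 c0) * cos (w0 x0 c0))) -
            sin (w0 x0 c0) * snd h / (2 * c0 * (c0 - 1) * cos (w0 x0 c0)))) / sqrt c0 -
          integral {w0 x0 c0..pi / 2} (F c0) * (inverse (sqrt c0) * (snd h * inverse (sqrt c0)) * inverse (sqrt c0)) / 2
      = - F c0 (w0 x0 c0) * (- sin x0 / (sqrt (k2 c0) * cos (w0 x0 c0))) / sqrt c0 * fst h +
           ((integral {w0 x0 c0..pi / 2} (dF c0) - F c0 (w0 x0 c0) * (- sin (w0 x0 c0) / (2 * c0 * (c0 - 1) * cos (w0 x0 c0)))) / sqrt c0 -
            integral {w0 x0 c0..pi / 2} (F c0) / (2 * c0 * sqrt c0)) * snd h"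
      unfolding e using c0 cw sk by (simp add: field_simps)
  qed
qed

definition rad :: "real \<Rightarrow> real \<Rightarrow> real \<Rightarrow> real" where
  "rad R c w = R^2 - (R^2 - 1) * k2 c * sin w ^ 2"
definition SS :: "real \<Rightarrow> real \<Rightarrow> real \<Rightarrow> real" where "SS R c w = sqrt (rad R c w)"
definition DD :: "real \<Rightarrow> real \<Rightarrow> real" where "DD c w = 1 - k2 c * sin w ^ 2"
definition FA :: "real \<Rightarrow> real \<Rightarrow> real \<Rightarrow> real" where "FA R c w = SS R c w / DD c w"
definition dSS :: "real \<Rightarrow> real \<Rightarrow> real \<Rightarrow> real" where
  "dSS R c w = - ((R^2 - 1) * sin w ^ 2 / c^2) / (2 * SS R c w)"
definition dFA :: "real \<Rightarrow> real \<Rightarrow> real \<Rightarrow> real" where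
  "dFA R c w = dSS R c w / DD c w + SS R c w * (sin w ^ 2 / c^2) / (DD c w)^2"

lemma k2_DERIV[derivative_intros]:
  assumes "(g has_field_derivative g') (at x within s)" "g x \<noteq> 0"
  shows "((\<lambda>x. k2 (g x)) has_field_derivative (g' / (g x)^2)) (at x within s)"
  unfolding k2_def
  by (rule DERIV_cong, (rule derivative_eq_intros assms refl)+) (use assms in \<open>auto simp: field_simps power2_eq_square\<close>)

lemma sin2_le1: "sin w ^ 2 \<le> (1::real)"
  using sin_cos_squared_add[of w] zero_le_power2[of "cos w"] by linarith

lemma ksin_bounds: assumes "1 < c" shows "0 \<le> k2 c * sin w ^ 2" "k2 c * sin w ^ 2 < 1"
proof -
  have k: "0 < k2 c" "k2 c < 1" using k2_bounds[OF assms] by auto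
  show "0 \<le> k2 c * sin w ^ 2" using k by simp
  have "k2 c * sin w ^ 2 \<le> k2 c" using k sin2_le1[of w] by (simp add: mult_left_le)
  then show "k2 c * sin w ^ 2 < 1" using k by linarith
qed

lemma DD_pos: "1 < c \<Longrightarrow> 0 < DD c w"
  unfolding DD_def using ksin_bounds by (simp add: algebra_simps)

lemma rad_pos: assumes "0 < R" "1 < c" shows "0 < rad R c w"
proof -
  have "rad R c w = R^2 * (1 - k2 c * sin w ^ 2) + k2 c * sin w ^ 2"
    unfolding rad_def by (simp add: algebra_simps)
  moreover have "0 < R^2 * (1 - k2 c * sin w ^ 2)" using assms ksin_bounds[OF assms(2), of w] by simp
  ultimately show ?thesis using ksin_bounds[OF assms(2), of w] by linarith
qed

lemma SS_pos: "0 < R \<Longrightarrow> 1 < c \<Longrightarrow> 0 < SS R c w"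
  unfolding SS_def using rad_pos by simp

lemma SS_nz: "0 < R \<Longrightarrow> 1 < c \<Longrightarrow> SS R c w \<noteq> 0"
  using SS_pos[of R c w] by simp
lemma DD_nz: "1 < c \<Longrightarrow> DD c w \<noteq> 0"
  using DD_pos[of c w] by simp

lemma SS_deriv: assumes "0 < R" "1 < c"
  shows "((\<lambda>c. SS R c w) has_field_derivative dSS R c w) (at c)"
proof -
  have "((\<lambda>c. sqrt (R^2 - (R^2 - 1) * k2 c * sin w ^ 2)) has_field_derivative dSS R c w) (at c)"
    apply (rule DERIV_cong)
     apply (rule derivative_eq_intros refl | use assms rad_pos[OF assms, of w] in \<open>simp add: rad_def; fail\<close>)+
    using assms by (simp add: dSS_def SS_def rad_def field_simps)
  then show ?thesis by (simp add: SS_def rad_def)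
qed

lemma FA_deriv: assumes "0 < R" "1 < c"
  shows "((\<lambda>c. FA R c w) has_field_derivative dFA R c w) (at c)"
proof -
  have d: "((\<lambda>c. DD c w) has_field_derivative - (sin w ^ 2 / c^2)) (at c)"
    unfolding DD_def
    apply (rule DERIV_cong)
     apply (rule derivative_eq_intros refl | use assms in \<open>simp; fail\<close>)+
    done
  have "((\<lambda>c. SS R c w / DD c w) has_field_derivative dFA R c w) (at c)"
    apply (rule DERIV_cong)
     apply (rule derivative_eq_intros refl SS_deriv[OF assms] d | use assms DD_pos[OF assms(2), of w] in \<open>simp; fail\<close>)+
    using assms DD_pos[OF assms(2), of w] by (simp add: dFA_def field_simps power2_eq_square)
  then show ?thesis by (simp add: FA_def)
qed

lemma cont_k2: "continuous_on S (\<lambda>z::real\<times>real. k2 (fst z))" if "\<forall>z\<in>S. 1 < fst z"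
  unfolding k2_def using that by (auto intro!: continuous_intros)

lemma split_cont: "continuous_on S (\<lambda>z. f (fst z) (snd z)) \<Longrightarrow> continuous_on S (\<lambda>(c,w). f c w)"
  by (simp add: case_prod_beta')

lemma cont_rad: "continuous_on ({1<..} \<times> UNIV) (\<lambda>z. rad R (fst z) (snd z))"
  unfolding rad_def by (auto intro!: continuous_intros cont_k2)

lemma cont_SS: "continuous_on ({1<..} \<times> UNIV) (\<lambda>z. SS R (fst z) (snd z))"
  unfolding SS_def by (auto intro!: continuous_intros cont_rad)

lemma cont_DD: "continuous_on ({1<..} \<times> UNIV) (\<lambda>z. DD (fst z) (snd z))"
  unfolding DD_def by (auto intro!: continuous_intros cont_k2)

lemma cont_FA: "0 < R \<Longrightarrow> continuous_on ({1<..} \<times> UNIV) (\<lambda>z. FA R (fst z) (snd z))"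
  unfolding FA_def by (auto intro!: continuous_intros cont_SS cont_DD simp: DD_pos[THEN less_imp_neq, symmetric] )

lemma cont_dSS: "0 < R \<Longrightarrow> continuous_on ({1<..} \<times> UNIV) (\<lambda>z. dSS R (fst z) (snd z))"
  unfolding dSS_def by (auto intro!: continuous_intros cont_SS simp: SS_nz)

lemma cont_dFA: "0 < R \<Longrightarrow> continuous_on ({1<..} \<times> UNIV) (\<lambda>z. dFA R (fst z) (snd z))"
  unfolding dFA_def by (auto intro!: continuous_intros cont_SS cont_DD cont_dSS simp: DD_nz)

definition Bt :: "real \<Rightarrow> real \<Rightarrow> real \<Rightarrow> real" where
  "Bt R x c = integral {w0 x c..pi/2} (SS R c) / sqrt c"
definition At :: "real \<Rightarrow> real \<Rightarrow> real \<Rightarrow> real" where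
  "At R x c = integral {w0 x c..pi/2} (FA R c) / sqrt c"

definition fAn :: "real \<Rightarrow> real \<Rightarrow> real \<Rightarrow> real" where
  "fAn R x c = sqrt (gmet R x) / (sin x * sqrt (c * sin x ^ 2 - 1))"
definition fBn :: "real \<Rightarrow> real \<Rightarrow> real \<Rightarrow> real" where
  "fBn R x c = sqrt (gmet R x) * sin x / sqrt (c * sin x ^ 2 - 1)"

lemma w0_facts:
  assumes D: "1 < c0 * sin x0 ^ 2"
  shows "sin (w0 x0 c0) = cos x0 / sqrt (k2 c0)"
    "SS R c0 (w0 x0 c0) = sqrt (gmet R x0)"
    "DD c0 (w0 x0 c0) = sin x0 ^ 2"
    "sqrt (k2 c0) * cos (w0 x0 c0) * sqrt c0 = sqrt (c0 * sin x0 ^ 2 - 1)"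
    "cos (w0 x0 c0) > 0"
proof -
  have c0: "1 < c0" using D_cond[OF D] by auto
  have k: "0 < k2 c0" "k2 c0 < 1" using k2_bounds[OF c0] by auto
  note u = u_bounds[OF D]
  show sw: "sin (w0 x0 c0) = cos x0 / sqrt (k2 c0)" unfolding w0_def using u by simp
  have s2: "sin (w0 x0 c0) ^ 2 = cos x0 ^ 2 / k2 c0" unfolding sw using k by (simp add: power_divide)
  have cx: "cos x0 ^ 2 = 1 - sin x0 ^ 2" by (simp add: cos_squared_eq)
  have r1: "rad R c0 (w0 x0 c0) = R^2 - (R^2 - 1) * cos x0 ^ 2"
    unfolding rad_def s2 using k by simp
  also have "\<dots> = gmet R x0" unfolding gmet_def sin_squared_eq by (simp add: algebra_simps)
  finally show "SS R c0 (w0 x0 c0) = sqrt (gmet R x0)" unfolding SS_def by simp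
  show "DD c0 (w0 x0 c0) = sin x0 ^ 2"
    unfolding DD_def s2 using k cx by (simp add: field_simps)
  have cw: "cos (w0 x0 c0) = sqrt (1 - (cos x0 / sqrt (k2 c0))^2)"
    unfolding w0_def using u by (intro cos_arcsin) auto
  show "cos (w0 x0 c0) > 0" unfolding cw using u(3) by simp
  have "sqrt (k2 c0) * cos (w0 x0 c0) * sqrt c0 = sqrt (k2 c0 * (1 - cos x0 ^ 2 / k2 c0) * c0)"
    unfolding cw using k by (simp add: real_sqrt_mult power_divide)
  also have "k2 c0 * (1 - cos x0 ^ 2 / k2 c0) * c0 = (k2 c0 - cos x0 ^ 2) * c0"
    using k by (simp add: field_simps)
  also have "\<dots> = c0 * sin x0 ^ 2 - 1"
    unfolding cx k2_def using c0 by (simp add: field_simps)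
  finally show "sqrt (k2 c0) * cos (w0 x0 c0) * sqrt c0 = sqrt (c0 * sin x0 ^ 2 - 1)" .
qed

lemma BX_val:
  assumes D: "1 < c0 * sin x0 ^ 2"
  shows "- SS R c0 (w0 x0 c0) * (- sin x0 / (sqrt (k2 c0) * cos (w0 x0 c0))) / sqrt c0 = fBn R x0 c0"
proof -
  note f = w0_facts[OF D]
  have "- SS R c0 (w0 x0 c0) * (- sin x0 / (sqrt (k2 c0) * cos (w0 x0 c0))) / sqrt c0
      = SS R c0 (w0 x0 c0) * sin x0 / (sqrt (k2 c0) * cos (w0 x0 c0) * sqrt c0)" by simp
  also have "\<dots> = fBn R x0 c0" unfolding f(4) f(2) fBn_def ..
  finally show ?thesis .
qed

lemma AX_val:
  assumes D: "1 < c0 * sin x0 ^ 2"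
  shows "- FA R c0 (w0 x0 c0) * (- sin x0 / (sqrt (k2 c0) * cos (w0 x0 c0))) / sqrt c0 = fAn R x0 c0"
proof -
  note f = w0_facts[OF D]
  have sn: "sin x0 \<noteq> 0" using D by auto
  have "- FA R c0 (w0 x0 c0) * (- sin x0 / (sqrt (k2 c0) * cos (w0 x0 c0))) / sqrt c0
      = SS R c0 (w0 x0 c0) / DD c0 (w0 x0 c0) * sin x0 / (sqrt (k2 c0) * cos (w0 x0 c0) * sqrt c0)" by (simp add: FA_def)
  also have "\<dots> = fAn R x0 c0" unfolding f(4) f(2) f(3) fAn_def using sn by (simp add: power2_eq_square)
  finally show ?thesis .
qed

lemma thetastar_facts:
  assumes c: "1 < c"
  shows "0 < thetastar c" "thetastar c < pi/2" "sin (thetastar c) = 1 / sqrt c"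
    "cos (thetastar c) = sqrt (k2 c)"
proof -
  have q: "0 < 1 / sqrt c" "1 / sqrt c < 1" using c by auto
  show "sin (thetastar c) = 1 / sqrt c" unfolding thetastar_def by (rule sin_arcsin) (use q in linarith)+
  have "arcsin 0 < arcsin (1 / sqrt c)" using q by (subst arcsin_less_mono) auto
  then show "0 < thetastar c" unfolding thetastar_def by simp
  show "thetastar c < pi/2" unfolding thetastar_def using arcsin_lt_bounded[of "1/sqrt c"] q by auto
  have q0: "-1 \<le> 1 / sqrt c" "1 / sqrt c \<le> 1" using q by linarith+
  show "cos (thetastar c) = sqrt (k2 c)" unfolding thetastar_def k2_def cos_arcsin[OF q0] using c
    by (simp add: power_divide)
qed

lemma sin_gt_iff: assumes "1 < c" "0 < v" "v < pi" shows "1 < c * sin v ^ 2 \<longleftrightarrow> 1 / sqrt c < sin v"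
proof -
  have sp: "0 < sin v" using assms by (simp add: sin_gt_zero)
  have e: "c * sin v ^ 2 = (sqrt c * sin v)^2" using assms by (simp add: power_mult_distrib)
  have y: "0 < sqrt c * sin v" using sp assms by simp
  have "1 < (sqrt c * sin v)^2 \<longleftrightarrow> 1 < sqrt c * sin v"
  proof
    assume "1 < (sqrt c * sin v)^2"
    show "1 < sqrt c * sin v"
    proof (rule ccontr)
      assume "\<not> 1 < sqrt c * sin v"
      then have "(sqrt c * sin v)^2 \<le> 1" using y by (intro power_le_one) auto
      then show False using \<open>1 < (sqrt c * sin v)^2\<close> by simp
    qed
  next
    assume "1 < sqrt c * sin v"
    then have "1^2 < (sqrt c * sin v)^2" by (intro power_strict_mono) auto
    then show "1 < (sqrt c * sin v)^2" by simp
  qed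
  moreover have "1 / sqrt c < sin v \<longleftrightarrow> 1 < sqrt c * sin v" using assms by (simp add: divide_less_eq mult.commute)
  ultimately show ?thesis using e by simp
qed

lemma sin_between:
  assumes "0 < th" "th < pi" "1 < c * sin th ^ 2" "thetastar c < v" "v < th"
  shows "1 < c * sin v ^ 2"
proof -
  have c: "1 < c" using D_cond[OF assms(3)] by auto
  note ts = thetastar_facts[OF c]
  have v0: "0 < v" "v < pi" using ts assms by auto
  have sth: "1 / sqrt c < sin th" using sin_gt_iff[OF c assms(1,2)] assms(3) by simp
  have "1 / sqrt c < sin v"
  proof (cases "v \<le> pi/2")
    case True
    have "sin (thetastar c) < sin v" using ts True assms by (intro sin_monotone_2pi) auto
    then show ?thesis using ts by simp
  next
    case False
    have "pi - th < pi/2" using False assms by auto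
    have "sin (pi - th) = sin th" by simp
    have "thetastar c < pi - th"
    proof (rule ccontr)
      assume "\<not> thetastar c < pi - th"
      then have "sin (pi - th) \<le> sin (thetastar c)" using ts assms
        by (intro sin_monotone_2pi_le) auto
      then show False using sth ts by simp
    qed
    then have "sin (thetastar c) < sin (pi - v)" using ts False assms by (intro sin_monotone_2pi) auto
    then show ?thesis using ts by simp
  qed
  then show ?thesis using sin_gt_iff[OF c v0] by simp
qed

definition AC :: "real \<Rightarrow> real \<Rightarrow> real \<Rightarrow> real" where
  "AC R x c = (integral {w0 x c..pi/2} (dFA R c) - FA R c (w0 x c) * (- sin (w0 x c) / (2 * c * (c - 1) * cos (w0 x c)))) / sqrt c
           - integral {w0 x c..pi/2} (FA R c) / (2 * c * sqrt c)"
definition BC :: "real \<Rightarrow> real \<Rightarrow> real \<Rightarrow> real" where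
  "BC R x c = (integral {w0 x c..pi/2} (dSS R c) - SS R c (w0 x c) * (- sin (w0 x c) / (2 * c * (c - 1) * cos (w0 x c)))) / sqrt c
           - integral {w0 x c..pi/2} (SS R c) / (2 * c * sqrt c)"

lemma cont_sub: "continuous_on ({1<..} \<times> UNIV) (\<lambda>z. f (fst z) (snd z)) \<Longrightarrow>
   continuous_on ({1<..} \<times> {-pi/2..pi/2}) (\<lambda>(c,w). f c w)"
  by (rule split_cont, erule continuous_on_subset) auto

lemma At_deriv:
  assumes R: "0 < R" and D: "1 < c0 * sin x0 ^ 2"
  shows "((\<lambda>z. At R (fst z) (snd z)) has_derivative (\<lambda>dz. fAn R x0 c0 * fst dz + AC R x0 c0 * snd dz)) (at (x0,c0))"
proof -
  have "((\<lambda>z. integral {w0 (fst z) (snd z)..pi/2} (FA R (snd z)) / sqrt (snd z)) has_derivative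
     (\<lambda>dz. (- FA R c0 (w0 x0 c0) * (- sin x0 / (sqrt (k2 c0) * cos (w0 x0 c0))) / sqrt c0) * fst dz
        + ((integral {w0 x0 c0..pi/2} (dFA R c0) - FA R c0 (w0 x0 c0) * (- sin (w0 x0 c0) / (2 * c0 * (c0 - 1) * cos (w0 x0 c0)))) / sqrt c0
           - integral {w0 x0 c0..pi/2} (FA R c0) / (2 * c0 * sqrt c0)) * snd dz)) (at (x0,c0))"
    by (rule Gt_deriv[OF cont_sub[OF cont_FA[OF R]] FA_deriv[OF R] cont_sub[OF cont_dFA[OF R]] D])
  then show ?thesis unfolding AX_val[OF D] At_def AC_def[symmetric] .
qed

lemma Bt_deriv:
  assumes R: "0 < R" and D: "1 < c0 * sin x0 ^ 2"
  shows "((\<lambda>z. Bt R (fst z) (snd z)) has_derivative (\<lambda>dz. fBn R x0 c0 * fst dz + BC R x0 c0 * snd dz)) (at (x0,c0))"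
proof -
  have "((\<lambda>z. integral {w0 (fst z) (snd z)..pi/2} (SS R (snd z)) / sqrt (snd z)) has_derivative
     (\<lambda>dz. (- SS R c0 (w0 x0 c0) * (- sin x0 / (sqrt (k2 c0) * cos (w0 x0 c0))) / sqrt c0) * fst dz
        + ((integral {w0 x0 c0..pi/2} (dSS R c0) - SS R c0 (w0 x0 c0) * (- sin (w0 x0 c0) / (2 * c0 * (c0 - 1) * cos (w0 x0 c0)))) / sqrt c0
           - integral {w0 x0 c0..pi/2} (SS R c0) / (2 * c0 * sqrt c0)) * snd dz)) (at (x0,c0))"
    by (rule Gt_deriv[OF cont_sub[OF cont_SS] SS_deriv[OF R] cont_sub[OF cont_dSS[OF R]] D])
  then show ?thesis unfolding BX_val[OF D] Bt_def BC_def[symmetric] .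
qed

lemma partial_x:
  assumes "((\<lambda>z. f (fst z) (snd z)) has_derivative (\<lambda>dz. a * fst dz + b * snd dz)) (at (x0,c0))"
  shows "((\<lambda>x. f x c0) has_real_derivative a) (at x0)"
proof -
  have "((\<lambda>x. (x, c0)) has_derivative (\<lambda>h. (h, 0))) (at x0)"
    by (auto intro!: derivative_eq_intros)
  from diff_chain_at[OF this assms]
  have "(((\<lambda>z. f (fst z) (snd z)) \<circ> (\<lambda>x. (x, c0))) has_derivative ((\<lambda>dz. a * fst dz + b * snd dz) \<circ> (\<lambda>h. (h, 0)))) (at x0)"
    .
  then have "((\<lambda>x. f x c0) has_derivative (\<lambda>h. a * h)) (at x0)" by (simp add: o_def)
  then show ?thesis by (simp add: has_field_derivative_def)
qed

lemma u_le: assumes "1 < c" "1 \<le> c * sin x ^ 2" shows "-1 \<le> cos x / sqrt (k2 c) \<and> cos x / sqrt (k2 c) \<le> 1"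
proof -
  have k: "0 < k2 c" using k2_bounds[OF assms(1)] by auto
  have "c * cos x ^ 2 = c - c * sin x ^ 2" using sin_cos_squared_add[of x] by algebra
  then have "c * cos x ^ 2 \<le> c - 1" using assms by linarith
  then have "cos x ^ 2 \<le> (c - 1) / c" using assms by (simp add: field_simps)
  then have h: "cos x ^ 2 \<le> k2 c" using assms by (simp add: k2_def field_simps)
  have "(cos x / sqrt (k2 c))^2 \<le> 1" using k h by (simp add: power_divide)
  then have "\<bar>cos x / sqrt (k2 c)\<bar> \<le> 1" by (simp add: abs_square_le_1)
  then have "cos x / sqrt (k2 c) \<le> 1 \<and> - (cos x / sqrt (k2 c)) \<le> 1" by (simp only: abs_le_iff)
  then show ?thesis by linarith
qed

lemma thetastar_le:
  assumes "0 < th" "th < pi" "1 < c * sin th ^ 2"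
  shows "thetastar c < th"
proof -
  have c: "1 < c" using D_cond[OF assms(3)] by auto
  note ts = thetastar_facts[OF c]
  have sth: "1 / sqrt c < sin th" using sin_gt_iff[OF c assms(1,2)] assms(3) by simp
  show ?thesis
  proof (cases "th \<le> pi/2")
    case True
    show ?thesis
    proof (rule ccontr)
      assume "\<not> thetastar c < th"
      then have "sin th \<le> sin (thetastar c)" using ts True assms by (intro sin_monotone_2pi_le) auto
      then show False using sth ts by simp
    qed
  next
    case False
    then show ?thesis using ts by auto
  qed
qed

lemma ge1_on:
  assumes "0 < th" "th < pi" "1 < c * sin th ^ 2" "x \<in> {thetastar c..th}"
  shows "1 \<le> c * sin x ^ 2"
proof -
  have c: "1 < c" using D_cond[OF assms(3)] by auto
  note ts = thetastar_facts[OF c]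
  consider "x = thetastar c" | "x = th" | "thetastar c < x \<and> x < th" using assms(4) by force
  then show ?thesis
  proof cases
    case 1
    then show ?thesis using ts c by (simp add: power_divide)
  next
    case 2
    then show ?thesis using assms by simp
  next
    case 3
    then show ?thesis using sin_between[OF assms(1,2,3)] by force
  qed
qed

lemma ftc_rep:
  fixes F f :: "real \<Rightarrow> real"
  assumes th: "0 < th" "th < pi" and D: "1 < C * sin th ^ 2"
  and contF: "continuous_on {-pi/2..pi/2} F"
  and der: "\<And>v. thetastar C < v \<Longrightarrow> v < th \<Longrightarrow> ((\<lambda>x. integral {w0 x C..pi/2} F / sqrt C) has_real_derivative f v) (at v)"
  shows "(f has_integral (integral {w0 th C..pi/2} F / sqrt C)) {thetastar C..th}"
proof -
  have c: "1 < C" using D_cond[OF D] by auto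
  note ts = thetastar_facts[OF c]
  have le: "thetastar C \<le> th" using thetastar_le[OF th D] by simp
  have ub: "\<forall>x\<in>{thetastar C..th}. -1 \<le> cos x / sqrt (k2 C) \<and> cos x / sqrt (k2 C) \<le> 1"
    using u_le[OF c ge1_on[OF th D]] by blast
  have w0c: "continuous_on {thetastar C..th} (\<lambda>x. w0 x C)"
    unfolding w0_def using ub k2_bounds[OF c] by (intro continuous_intros) auto
  have w0r: "(\<lambda>x. w0 x C) ` {thetastar C..th} \<subseteq> {-pi/2..pi/2}"
    unfolding w0_def using ub arcsin_bounded by fastforce
  have ic: "continuous_on {-pi/2..pi/2} (\<lambda>a. integral {a..pi/2} F)"
    by (rule indefinite_integral_continuous_1', rule integrable_continuous_real, rule contF)
  have cont: "continuous_on {thetastar C..th} (\<lambda>x. integral {w0 x C..pi/2} F / sqrt C)"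
    using c by (intro continuous_intros continuous_on_compose2[OF ic w0c w0r]) auto
  have w0s: "w0 (thetastar C) C = pi/2"
    unfolding w0_def ts(4) using k2_bounds[OF c] by simp
  have "(f has_integral ((\<lambda>x. integral {w0 x C..pi/2} F / sqrt C) th - (\<lambda>x. integral {w0 x C..pi/2} F / sqrt C) (thetastar C))) {thetastar C..th}"
    by (rule fundamental_theorem_of_calculus_interior[OF le cont])
       (use der in \<open>auto simp: has_real_derivative_iff_has_vector_derivative\<close>)
  then show ?thesis using w0s by simp
qed

lemma integrand_A:
  assumes "0 < v" "v < pi" "1 < C * sin v ^ 2"
  shows "sqrt ((cot v ^ 2 + R ^ 2) / (C * sin v ^ 2 - 1)) = fAn R v C"
proof -
  have sp: "0 < sin v" using assms by (simp add: sin_gt_zero)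
  have "cot v ^ 2 + R^2 = gmet R v / sin v ^ 2"
    unfolding cot_def gmet_def using sp by (simp add: field_simps power_divide)
  then have "sqrt ((cot v ^ 2 + R ^ 2) / (C * sin v ^ 2 - 1)) = sqrt (gmet R v) / (sqrt (sin v ^ 2) * sqrt (C * sin v ^ 2 - 1))"
    by (simp add: real_sqrt_divide real_sqrt_mult)
  also have "\<dots> = fAn R v C" using sp by (simp add: fAn_def)
  finally show ?thesis .
qed

lemma integrand_B:
  shows "sqrt ((cos v ^ 2 + R ^ 2 * sin v ^ 2) / (C * sin v ^ 2 - 1)) * sin v = fBn R v C"
  unfolding fBn_def gmet_def by (simp add: real_sqrt_divide)

lemma rep:
  assumes R: "0 < R" and th: "0 < th" "th < pi" and D: "1 < C * sin th ^ 2"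
  shows "Aint R th C = At R th C" "Bint R th C = Bt R th C"
proof -
  have c: "1 < C" using D_cond[OF D] by auto
  have contFA: "continuous_on {-pi/2..pi/2} (FA R C)"
    by (rule continuous_on_compose2[OF cont_FA[OF R], where f="\<lambda>w. (C,w)", simplified])
       (auto intro!: continuous_intros simp: c)
  have contSS: "continuous_on {-pi/2..pi/2} (SS R C)"
    by (rule continuous_on_compose2[OF cont_SS, where f="\<lambda>w. (C,w)", simplified])
       (auto intro!: continuous_intros simp: c)
  have "((\<lambda>v. sqrt ((cot v ^ 2 + R ^ 2) / (C * sin v ^ 2 - 1))) has_integral At R th C) {thetastar C..th}"
    unfolding At_def
  proof (rule ftc_rep[OF th D contFA])
    fix v assume v: "thetastar C < v" "v < th"
    have Dv: "1 < C * sin v ^ 2" by (rule sin_between[OF th D v])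
    have v0: "0 < v" "v < pi" using v th thetastar_facts[OF c] by auto
    show "((\<lambda>x. integral {w0 x C..pi / 2} (FA R C) / sqrt C) has_real_derivative sqrt ((cot v ^ 2 + R ^ 2) / (C * sin v ^ 2 - 1))) (at v)"
      unfolding integrand_A[OF v0 Dv] using partial_x[OF At_deriv[OF R Dv]] by (simp add: At_def)
  qed
  then show "Aint R th C = At R th C" unfolding Aint_def by (rule integral_unique)
  have "((\<lambda>v. sqrt ((cos v ^ 2 + R ^ 2 * sin v ^ 2) / (C * sin v ^ 2 - 1)) * sin v) has_integral Bt R th C) {thetastar C..th}"
    unfolding Bt_def
  proof (rule ftc_rep[OF th D contSS])
    fix v assume v: "thetastar C < v" "v < th"
    have Dv: "1 < C * sin v ^ 2" by (rule sin_between[OF th D v])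
    show "((\<lambda>x. integral {w0 x C..pi / 2} (SS R C) / sqrt C) has_real_derivative sqrt ((cos v ^ 2 + R ^ 2 * sin v ^ 2) / (C * sin v ^ 2 - 1)) * sin v) (at v)"
      unfolding integrand_B using partial_x[OF Bt_deriv[OF R Dv]] by (simp add: Bt_def)
  qed
  then show "Bint R th C = Bt R th C" unfolding Bint_def by (rule integral_unique)
qed

definition Phi :: "real \<Rightarrow> real \<Rightarrow> real \<Rightarrow> real" where
  "Phi R c w = - (SS R c w * sin w * cos w) / (2 * c * DD c w)"

definition GG :: "real \<Rightarrow> real \<Rightarrow> real \<Rightarrow> real" where
  "GG R c w = dFA R c w - FA R c w / (2 * c) - c * dSS R c w"

lemma sin2_wderiv: "((\<lambda>w. A - K * sin w ^ 2) has_real_derivative (- K * (2 * sin w * cos w))) (at w)"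
  by (rule DERIV_cong, (rule derivative_eq_intros refl)+) simp

lemma rad_wderiv: "((\<lambda>w. rad R c w) has_real_derivative (- (R^2 - 1) * k2 c * (2 * sin w * cos w))) (at w)"
proof -
  have e: "(\<lambda>w. rad R c w) = (\<lambda>w. R^2 - ((R^2 - 1) * k2 c) * sin w ^ 2)" unfolding rad_def by (simp add: mult.assoc)
  show ?thesis unfolding e by (rule DERIV_cong[OF sin2_wderiv]) (simp add: algebra_simps)
qed

lemma SS_wderiv: assumes "0 < R" "1 < c"
  shows "((\<lambda>w. SS R c w) has_real_derivative (- (R^2 - 1) * k2 c * sin w * cos w / SS R c w)) (at w)"
proof -
  have r: "0 < rad R c w" by (rule rad_pos[OF assms])
  have "((\<lambda>w. sqrt (rad R c w)) has_real_derivative (- (R^2 - 1) * k2 c * sin w * cos w / SS R c w)) (at w)"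
    apply (rule DERIV_cong)
     apply (rule derivative_eq_intros refl rad_wderiv | use r in \<open>simp; fail\<close>)+
    using r by (simp add: SS_def field_simps)
  then show ?thesis by (simp add: SS_def)
qed

lemma Phi_alg:
  fixes S s co k c R :: real
  assumes nz: "S \<noteq> 0" "D \<noteq> 0" "c \<noteq> 0" and h: "S^2 = R^2 - (R^2 - 1) * k * s^2" "co^2 = 1 - s^2" "k * c = c - 1" "D = 1 - k * s^2"
  shows "(- ((- (R\<^sup>2 - 1) * k * s * co / S * s + co * 1 * S) * co + - s * 1 * (S * s)) * (2 * c * D) -
      - (S * s * co) * (0 * D + - 2 * k * s * co * (2 * c))) / (2 * c * D * (2 * c * D))
    = ((- ((R^2 - 1) * s ^ 2 / c^2) / (2 * S)) / D + S * (s ^ 2 / c^2) / D^2) - (S / D) / (2 * c) - c * (- ((R^2 - 1) * s ^ 2 / c^2) / (2 * S))"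
proof -
  define P where "P = 2 * (- c * D * (- (R^2-1) * k * s^2 * co^2 + S^2 * (co^2 - s^2)) - 2 * c * k * S^2 * s^2 * co^2)"
  define Q where "Q = 2 * (- (R^2-1) * s^2 * D + 2 * S^2 * s^2 - c * S^2 * D + (R^2-1) * c * s^2 * D^2)"
  have L: "(- ((- (R\<^sup>2 - 1) * k * s * co / S * s + co * 1 * S) * co + - s * 1 * (S * s)) * (2 * c * D) -
      - (S * s * co) * (0 * D + - 2 * k * s * co * (2 * c))) / (2 * c * D * (2 * c * D)) = P / (4 * c^2 * D^2 * S)"
    unfolding P_def using nz by (simp add: field_simps power2_eq_square)
  have Rr: "((- ((R^2 - 1) * s ^ 2 / c^2) / (2 * S)) / D + S * (s ^ 2 / c^2) / D^2) - (S / D) / (2 * c) - c * (- ((R^2 - 1) * s ^ 2 / c^2) / (2 * S))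
     = Q / (4 * c^2 * D^2 * S)"
    unfolding Q_def using nz by (simp add: field_simps power2_eq_square)
  define P1 where "P1 = 2 * (- D * (- (R^2-1) * k * s^2 * co^2 + S^2 * (co^2 - s^2)) - 2 * k * S^2 * s^2 * co^2)"
  define Q0 where "Q0 = 2 * (- (R^2-1) * s^2 * D + 2 * S^2 * s^2)"
  define Q1 where "Q1 = 2 * (- (S^2) * D + (R^2-1) * s^2 * D^2)"
  have e1: "P1 - Q1 = (1 - k) * Q0"
    unfolding P1_def Q1_def Q0_def h(1,2,4) by algebra
  have "P = c * P1" "Q = Q0 + c * Q1" unfolding P_def P1_def Q_def Q0_def Q1_def by (simp_all add: algebra_simps)
  then have "P - Q = c * (P1 - Q1) - Q0" by (simp add: algebra_simps)
  also have "\<dots> = (c - k * c - 1) * Q0" unfolding e1 by (simp add: algebra_simps)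
  also have "\<dots> = 0" using h(3) by simp
  finally have PQ: "P = Q" by simp
  show ?thesis unfolding L Rr PQ ..
qed

lemma DD_wderiv: "((\<lambda>w. DD c w) has_real_derivative (- 2 * k2 c * sin w * cos w)) (at w)"
  unfolding DD_def using sin2_wderiv[of 1 "k2 c" w] by (simp add: algebra_simps)

lemma Phi_deriv: assumes "0 < R" "1 < c"
  shows "((\<lambda>w. Phi R c w) has_real_derivative GG R c w) (at w)"
proof -
  have "((\<lambda>w. - (SS R c w * sin w * cos w) / (2 * c * DD c w)) has_real_derivative GG R c w) (at w)"
    apply (rule DERIV_cong)
     apply (rule derivative_eq_intros refl SS_wderiv[OF assms] DD_wderiv | use DD_nz[OF assms(2)] assms in \<open>simp; fail\<close>)+
    unfolding GG_def dFA_def dSS_def FA_def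
  proof (rule Phi_alg[OF SS_nz[OF assms] DD_nz[OF assms(2)]])
    show "c \<noteq> 0" using assms by simp
    show "(SS R c w)^2 = R^2 - (R^2 - 1) * k2 c * (sin w)^2"
      using rad_pos[OF assms, of w] by (simp add: SS_def rad_def)
    show "(cos w)^2 = 1 - (sin w)^2" by (rule cos_squared_eq)
    show "k2 c * c = c - 1" using assms by (simp add: k2_def algebra_simps)
    show "DD c w = 1 - k2 c * (sin w)^2" by (simp add: DD_def)
  qed
  then show ?thesis by (simp add: Phi_def)
qed

lemma final_alg:
  fixes IB IA IAc IBc S D sn cs c q :: real
  assumes nz: "q \<noteq> 0" "cs \<noteq> 0" "D \<noteq> 0" "c \<noteq> 0" "c - 1 \<noteq> 0"
    and hint: "c * D = 1 + (c - 1) * cs^2"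
    and key: "IAc - IA / (2 * c) - c * IBc = S * sn * cs / (2 * c * D)"
  shows "IB / q = 2 * ((IAc - S / D * (- sn / (2 * c * (c - 1) * cs))) / q - IA / (2 * c * q)
     - c * ((IBc - S * (- sn / (2 * c * (c - 1) * cs))) / q - IB / (2 * c * q)))"
proof -
  define W where "W = - sn / (2 * c * (c - 1) * cs)"
  have t1: "2 * ((IAc - S / D * W) / q - IA / (2 * c * q) - c * ((IBc - S * W) / q - IB / (2 * c * q)))
     = (2 * (IAc - IA / (2 * c) - c * IBc) + IB + 2 * S * W * (c - 1 / D)) / q"
    using nz by (simp add: field_simps)
  have cD: "c - 1 / D = (c - 1) * cs^2 / D"
    using nz hint by (simp add: field_simps)
  have t2: "2 * S * W * (c - 1 / D) = - (S * sn * cs / (c * D))"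
    unfolding cD W_def using nz by (simp add: field_simps power2_eq_square)
  have t3: "2 * (IAc - IA / (2 * c) - c * IBc) = S * sn * cs / (c * D)"
    unfolding key using nz by (simp add: field_simps)
  show ?thesis unfolding W_def[symmetric] t1 t2 t3 by simp
qed

lemma identity:
  assumes R: "0 < R" and D: "1 < c0 * sin x0 ^ 2"
  shows "Bt R x0 c0 = 2 * (AC R x0 c0 - c0 * BC R x0 c0)"
proof -
  have c0: "1 < c0" using D_cond[OF D] by auto
  note u = u_bounds[OF D]
  define a where "a = w0 x0 c0"
  have a0: "-pi/2 < a" "a < pi/2" unfolding a_def w0_def using arcsin_lt_bounded[OF u(1,2)] by auto
  have cnt: "continuous_on {a..pi/2} (f c0)" if "continuous_on ({1<..} \<times> UNIV) (\<lambda>z. f (fst z) (snd z))" for f :: "real \<Rightarrow> real \<Rightarrow> real"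
    by (rule continuous_on_compose2[OF that, where f="\<lambda>w. (c0,w)", simplified])
       (auto intro!: continuous_intros simp: c0)
  have hi: "(f c0 has_integral integral {a..pi/2} (f c0)) {a..pi/2}" if "continuous_on ({1<..} \<times> UNIV) (\<lambda>z. f (fst z) (snd z))" for f :: "real \<Rightarrow> real \<Rightarrow> real"
    using integrable_continuous_real[OF cnt[OF that]] has_integral_integral by blast
  note i1 = hi[OF cont_dFA[OF R]] and i2 = hi[OF cont_FA[OF R]] and i3 = hi[OF cont_dSS[OF R]]
  have lin: "(GG R c0 has_integral (integral {a..pi/2} (dFA R c0) - integral {a..pi/2} (FA R c0) / (2 * c0)
       - c0 * integral {a..pi/2} (dSS R c0))) {a..pi/2}"
    unfolding GG_def[abs_def]
    by (intro has_integral_diff has_integral_divide has_integral_mult_right i1 i2 i3)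
  have ftc: "(GG R c0 has_integral (Phi R c0 (pi/2) - Phi R c0 a)) {a..pi/2}"
    by (rule fundamental_theorem_of_calculus)
       (use a0 Phi_deriv[OF R c0] in \<open>auto simp: has_real_derivative_iff_has_vector_derivative intro: has_vector_derivative_at_within\<close>)
  have key: "integral {a..pi/2} (dFA R c0) - integral {a..pi/2} (FA R c0) / (2 * c0) - c0 * integral {a..pi/2} (dSS R c0)
      = SS R c0 a * sin a * cos a / (2 * c0 * DD c0 a)"
    using has_integral_unique[OF lin ftc] by (simp add: Phi_def)
  have cs: "cos a \<noteq> 0" using w0_facts(5)[OF D] unfolding a_def by simp
  have hint: "c0 * DD c0 a = 1 + (c0 - 1) * cos a ^ 2"
    using c0 unfolding DD_def k2_def sin_squared_eq by (simp add: field_simps)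
  show ?thesis
    unfolding Bt_def AC_def BC_def a_def[symmetric] FA_def[of R c0 a]
    by (rule final_alg[OF _ cs DD_nz[OF c0] _ _ hint key]) (use c0 in auto)
qed

lemma comp1:
  assumes F: "((\<lambda>z. F (fst z) (snd z)) has_derivative (\<lambda>dz. X * fst dz + Y * snd dz)) (at (x0,c0))"
   and dx: "(xf has_real_derivative x') (at v)" and dc: "(cf has_real_derivative c') (at v)"
   and e: "xf v = x0" "cf v = c0"
  shows "((\<lambda>v. F (xf v) (cf v)) has_real_derivative X * x' + Y * c') (at v)"
proof -
  have inner: "((\<lambda>v. (xf v, cf v)) has_derivative (\<lambda>h. (x' * h, c' * h))) (at v)"
    using dx dc unfolding has_field_derivative_def by (intro has_derivative_Pair)
  have F': "((\<lambda>z. F (fst z) (snd z)) has_derivative (\<lambda>dz. X * fst dz + Y * snd dz)) (at (xf v, cf v))"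
    using F e by simp
  from diff_chain_at[OF inner F']
  have "((\<lambda>v. F (xf v) (cf v)) has_derivative (\<lambda>h. X * (x' * h) + Y * (c' * h))) (at v)"
    by (simp add: o_def)
  then show ?thesis unfolding has_field_derivative_def
    by (rule has_derivative_eq_rhs) (auto simp: fun_eq_iff algebra_simps)
qed

lemma gmet_pos: assumes "0 < R" shows "0 < gmet R y"
proof (cases "sin y = 0")
  case True
  then have "cos y ^ 2 = 1" using sin_cos_squared_add[of y] by simp
  moreover have "0 \<le> R^2 * sin y ^ 2" by simp
  ultimately show ?thesis unfolding gmet_def by linarith
next
  case False
  then have "0 < R^2 * sin y ^ 2" using assms by simp
  then show ?thesis unfolding gmet_def by (smt (verit) zero_le_power2)
qed

lemma Lobs_eq: "sin y \<noteq> 0 \<Longrightarrow> Lobs t x y a b = a"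
  by (simp add: Lobs_def phidot_def)

lemma Eobs_eq: "0 < R \<Longrightarrow> sin y \<noteq> 0 \<Longrightarrow> Eobs R t x y a b = (a^2 / sin y ^ 2 + b^2 / gmet R y) / 2"
  using gmet_pos[of R y]
  by (simp add: Eobs_def lagr_def phidot_def thetadot_def power_divide field_simps power2_eq_square)

lemma Cobs_eq: "sin y \<noteq> 0 \<Longrightarrow> Cobs R t x y a b = 2 * Eobs R t x y a b / a^2"
  by (simp add: Cobs_def Lobs_eq)

lemma sobs_eq: "0 < R \<Longrightarrow> sin y \<noteq> 0 \<Longrightarrow> sobs R t x y a b = sgn b * sgn a"
  using gmet_pos[of R y] by (simp add: sobs_def Lobs_eq thetadot_def sgn_divide)

lemma D_gen:
  assumes R: "0 < R" and s: "sin y \<noteq> 0" and a: "a \<noteq> 0" and b: "b \<noteq> 0"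
  shows "1 < 2 * Eobs R t x y a b / a^2 * sin y ^ 2"
proof -
  have g: "0 < gmet R y" by (rule gmet_pos[OF R])
  have "2 * Eobs R t x y a b / a^2 * sin y ^ 2 = 1 + b^2 * sin y ^ 2 / (gmet R y * a^2)"
    unfolding Eobs_eq[OF R s] using s a g by (simp add: field_simps power2_eq_square)
  moreover have "0 < b^2 * sin y ^ 2 / (gmet R y * a^2)" using s a b g by simp
  ultimately show ?thesis by simp
qed

lemma Theta_eq:
  assumes R: "0 < R" and y: "0 < y" "y < pi" and a: "a \<noteq> 0" and b: "b \<noteq> 0"
  shows "Thetaobs R t x y a b = x - sgn b * sgn a * At R y (2 * Eobs R t x y a b / a^2)"
proof -
  have s: "sin y \<noteq> 0" using y sin_gt_zero by force
  show ?thesis unfolding Thetaobs_def sobs_eq[OF R s] Cobs_eq[OF s] rep(1)[OF R y D_gen[OF R s a b]] ..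
qed

lemma T_eq:
  assumes R: "0 < R" and y: "0 < y" "y < pi" and a: "a \<noteq> 0" and b: "b \<noteq> 0"
  shows "Tobs R t x y a b = t - sgn b * sgn a * inverse a * Bt R y (2 * Eobs R t x y a b / a^2)"
proof -
  have s: "sin y \<noteq> 0" using y sin_gt_zero by force
  show ?thesis unfolding Tobs_def sobs_eq[OF R s] Cobs_eq[OF s] rep(2)[OF R y D_gen[OF R s a b]] Lobs_eq[OF s] ..
qed

theorem mainTheorem4:
  fixes R t \<phi> \<theta> pphi ptheta :: real
  assumes "R > 0" and "R \<noteq> 1"
    and "0 < \<theta>" and "\<theta> < pi" and "pphi \<noteq> 0" and "ptheta \<noteq> 0"
  shows "poisson (Eobs R) Lobs t \<phi> \<theta> pphi ptheta = 0
    \<and> poisson (Eobs R) (Thetaobs R) t \<phi> \<theta> pphi ptheta = 0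
    \<and> poisson (Eobs R) (Tobs R) t \<phi> \<theta> pphi ptheta = 1
    \<and> poisson Lobs (Thetaobs R) t \<phi> \<theta> pphi ptheta = -1
    \<and> poisson Lobs (Tobs R) t \<phi> \<theta> pphi ptheta = 0
    \<and> poisson (Thetaobs R) (Tobs R) t \<phi> \<theta> pphi ptheta = 0"
proof -
  have R: "0 < R" and th: "0 < \<theta>" "\<theta> < pi" and p: "pphi \<noteq> 0" and q: "ptheta \<noteq> 0" using assms by auto
  have sn: "0 < sin \<theta>" using th by (simp add: sin_gt_zero)
  then have snz: "sin \<theta> \<noteq> 0" by simp
  have g: "0 < gmet R \<theta>" by (rule gmet_pos[OF R])
  define s where "s = sgn ptheta * sgn pphi"
  define E0 where "E0 = Eobs R t \<phi> \<theta> pphi ptheta"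
  define C0 where "C0 = 2 * E0 / pphi^2"
  have E0v: "E0 = (pphi^2 / sin \<theta> ^ 2 + ptheta^2 / gmet R \<theta>) / 2" unfolding E0_def by (rule Eobs_eq[OF R snz])
  have D0: "1 < C0 * sin \<theta> ^ 2" unfolding C0_def E0_def by (rule D_gen[OF R snz p q])
  note Ad = At_deriv[OF R D0] and Bd = Bt_deriv[OF R D0] and idt = identity[OF R D0]
  define Ax where "Ax = fAn R \<theta> C0"
  define Bx where "Bx = fBn R \<theta> C0"
  define Ac where "Ac = AC R \<theta> C0"
  define Bc where "Bc = BC R \<theta> C0"
  define B0 where "B0 = Bt R \<theta> C0"
  let ?E = "\<lambda>y a b. Eobs R t \<phi> y a b"
  have ex: "\<exists>D. ((\<lambda>y. ?E y pphi ptheta) has_real_derivative D) (at \<theta>)"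
    unfolding Eobs_def lagr_def phidot_def thetadot_def gmet_def
    by (rule exI, (rule derivative_intros | use snz g in \<open>simp add: gmet_def; fail\<close>)+)
  then obtain Eth where hEth: "((\<lambda>y. ?E y pphi ptheta) has_real_derivative Eth) (at \<theta>)" by blast
  have hEp: "((\<lambda>a. ?E \<theta> a ptheta) has_real_derivative pphi / sin \<theta> ^ 2) (at pphi)"
    unfolding Eobs_eq[OF R snz]
    using snz by (auto intro!: derivative_eq_intros simp: field_simps power2_eq_square)
  have hEq: "((\<lambda>b. ?E \<theta> pphi b) has_real_derivative ptheta / gmet R \<theta>) (at ptheta)"
    unfolding Eobs_eq[OF R snz]
    using g by (auto intro!: derivative_eq_intros simp: field_simps power2_eq_square)
  define Cth where "Cth = 2 * Eth / pphi^2"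
  define Cq where "Cq = 2 * (ptheta / gmet R \<theta>) / pphi^2"
  define Cp where "Cp = (2 * (pphi / sin \<theta> ^ 2) * pphi^2 - 2 * E0 * (2 * pphi)) / (pphi^2)^2"
  have hCth: "((\<lambda>y. 2 * ?E y pphi ptheta / pphi^2) has_real_derivative Cth) (at \<theta>)"
    unfolding Cth_def using p by (auto intro!: derivative_eq_intros hEth simp: field_simps)
  have hCq: "((\<lambda>b. 2 * ?E \<theta> pphi b / pphi^2) has_real_derivative Cq) (at ptheta)"
    unfolding Cq_def using p g by (auto intro!: derivative_eq_intros hEq simp: field_simps)
  have hCp: "((\<lambda>a. 2 * ?E \<theta> a ptheta / a^2) has_real_derivative Cp) (at pphi)"
    unfolding Cp_def E0_def
    using p by (auto intro!: derivative_eq_intros hEp simp: power2_eq_square)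
  have C0e: "2 * ?E \<theta> pphi ptheta / pphi^2 = C0" unfolding C0_def E0_def ..
  have oS: "open {0<..<pi::real}" by simp
  have oP: "open {a::real. 0 < a * pphi}" by (intro open_Collect_less continuous_intros)
  have oQ: "open {b::real. 0 < b * ptheta}" by (intro open_Collect_less continuous_intros)
  have inP: "pphi \<in> {a::real. 0 < a * pphi}" using p by (cases "pphi > 0") (auto simp: mult_neg_neg)
  have inQ: "ptheta \<in> {b::real. 0 < b * ptheta}" using q by (cases "ptheta > 0") (auto simp: mult_neg_neg)
  have sgnP: "a \<noteq> 0 \<and> sgn a = sgn pphi" if "0 < a * pphi" for a
    using that by (auto simp: zero_less_mult_iff sgn_if)
  have sgnQ: "b \<noteq> 0 \<and> sgn b = sgn ptheta" if "0 < b * ptheta" for b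
    using that by (auto simp: zero_less_mult_iff sgn_if)
  have Thphi: "((\<lambda>x. Thetaobs R t x \<theta> pphi ptheta) has_real_derivative 1) (at \<phi>)"
  proof -
    have "(\<lambda>x. Thetaobs R t x \<theta> pphi ptheta) = (\<lambda>x. x - s * At R \<theta> C0)"
      using Theta_eq[OF R th p q] C0e by (simp add: s_def fun_eq_iff Eobs_def)
    then show ?thesis by (auto intro!: derivative_eq_intros)
  qed
  have Thth: "((\<lambda>y. Thetaobs R t \<phi> y pphi ptheta) has_real_derivative - s * (Ax * 1 + Ac * Cth)) (at \<theta>)"
  proof (rule has_field_derivative_transform_within_open[OF _ oS])
    have "((\<lambda>y. At R y (2 * ?E y pphi ptheta / pphi^2)) has_real_derivative Ax * 1 + Ac * Cth) (at \<theta>)"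
      unfolding Ax_def Ac_def by (rule comp1[OF Ad DERIV_ident hCth refl C0e])
    then show "((\<lambda>y. \<phi> - s * At R y (2 * ?E y pphi ptheta / pphi^2)) has_real_derivative - s * (Ax * 1 + Ac * Cth)) (at \<theta>)"
      by (auto intro!: derivative_eq_intros)
    show "\<theta> \<in> {0<..<pi}" using th by simp
    show "\<phi> - s * At R y (2 * ?E y pphi ptheta / pphi^2) = Thetaobs R t \<phi> y pphi ptheta" if "y \<in> {0<..<pi}" for y
      using Theta_eq[OF R _ _ p q, of y] that by (simp add: s_def)
  qed
  have Thp: "((\<lambda>a. Thetaobs R t \<phi> \<theta> a ptheta) has_real_derivative - s * (Ax * 0 + Ac * Cp)) (at pphi)"
  proof (rule has_field_derivative_transform_within_open[OF _ oP inP])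
    have "((\<lambda>a. At R \<theta> (2 * ?E \<theta> a ptheta / a^2)) has_real_derivative Ax * 0 + Ac * Cp) (at pphi)"
      unfolding Ax_def Ac_def by (rule comp1[OF Ad DERIV_const hCp refl C0e])
    then show "((\<lambda>a. \<phi> - s * At R \<theta> (2 * ?E \<theta> a ptheta / a^2)) has_real_derivative - s * (Ax * 0 + Ac * Cp)) (at pphi)"
      by (auto intro!: derivative_eq_intros)
    show "\<phi> - s * At R \<theta> (2 * ?E \<theta> a ptheta / a^2) = Thetaobs R t \<phi> \<theta> a ptheta" if "a \<in> {a. 0 < a * pphi}" for a
      using Theta_eq[OF R th _ q, of a] sgnP[of a] that by (simp add: s_def)
  qed
  have Thq: "((\<lambda>b. Thetaobs R t \<phi> \<theta> pphi b) has_real_derivative - s * (Ax * 0 + Ac * Cq)) (at ptheta)"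
  proof (rule has_field_derivative_transform_within_open[OF _ oQ inQ])
    have "((\<lambda>b. At R \<theta> (2 * ?E \<theta> pphi b / pphi^2)) has_real_derivative Ax * 0 + Ac * Cq) (at ptheta)"
      unfolding Ax_def Ac_def by (rule comp1[OF Ad DERIV_const hCq refl C0e])
    then show "((\<lambda>b. \<phi> - s * At R \<theta> (2 * ?E \<theta> pphi b / pphi^2)) has_real_derivative - s * (Ax * 0 + Ac * Cq)) (at ptheta)"
      by (auto intro!: derivative_eq_intros)
    show "\<phi> - s * At R \<theta> (2 * ?E \<theta> pphi b / pphi^2) = Thetaobs R t \<phi> \<theta> pphi b" if "b \<in> {b. 0 < b * ptheta}" for b
      using Theta_eq[OF R th p, of b] sgnQ[of b] that by (simp add: s_def)
  qed
  have hB_th: "((\<lambda>y. Bt R y (2 * ?E y pphi ptheta / pphi^2)) has_real_derivative Bx * 1 + Bc * Cth) (at \<theta>)"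
    unfolding Bx_def Bc_def by (rule comp1[OF Bd DERIV_ident hCth refl C0e])
  have hB_p: "((\<lambda>a. Bt R \<theta> (2 * ?E \<theta> a ptheta / a^2)) has_real_derivative Bx * 0 + Bc * Cp) (at pphi)"
    unfolding Bx_def Bc_def by (rule comp1[OF Bd DERIV_const hCp refl C0e])
  have hB_q: "((\<lambda>b. Bt R \<theta> (2 * ?E \<theta> pphi b / pphi^2)) has_real_derivative Bx * 0 + Bc * Cq) (at ptheta)"
    unfolding Bx_def Bc_def by (rule comp1[OF Bd DERIV_const hCq refl C0e])
  have B0e: "Bt R \<theta> (2 * ?E \<theta> pphi ptheta / pphi^2) = B0" unfolding B0_def C0e ..
  have Tphi: "((\<lambda>x. Tobs R t x \<theta> pphi ptheta) has_real_derivative 0) (at \<phi>)"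
  proof -
    have "(\<lambda>x. Tobs R t x \<theta> pphi ptheta) = (\<lambda>x. t - s * inverse pphi * Bt R \<theta> C0)"
      using T_eq[OF R th p q] C0e by (simp add: s_def fun_eq_iff Eobs_def)
    then show ?thesis by (auto intro!: derivative_eq_intros)
  qed
  have Tth: "((\<lambda>y. Tobs R t \<phi> y pphi ptheta) has_real_derivative - (s * inverse pphi * (Bx * 1 + Bc * Cth))) (at \<theta>)"
  proof (rule has_field_derivative_transform_within_open[OF _ oS])
    show "((\<lambda>y. t - s * inverse pphi * Bt R y (2 * ?E y pphi ptheta / pphi^2)) has_real_derivative - (s * inverse pphi * (Bx * 1 + Bc * Cth))) (at \<theta>)"
      by (auto intro!: derivative_eq_intros hB_th)
    show "\<theta> \<in> {0<..<pi}" using th by simp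
    show "t - s * inverse pphi * Bt R y (2 * ?E y pphi ptheta / pphi^2) = Tobs R t \<phi> y pphi ptheta" if "y \<in> {0<..<pi}" for y
      using T_eq[OF R _ _ p q, of y] that by (simp add: s_def)
  qed
  have Tp: "((\<lambda>a. Tobs R t \<phi> \<theta> a ptheta) has_real_derivative - (s * (- (inverse pphi * inverse pphi) * B0 + inverse pphi * (Bx * 0 + Bc * Cp)))) (at pphi)"
  proof (rule has_field_derivative_transform_within_open[OF _ oP inP])
    show "((\<lambda>a. t - s * inverse a * Bt R \<theta> (2 * ?E \<theta> a ptheta / a^2)) has_real_derivative - (s * (- (inverse pphi * inverse pphi) * B0 + inverse pphi * (Bx * 0 + Bc * Cp)))) (at pphi)"
      apply (rule DERIV_cong)
       apply (rule derivative_eq_intros refl hB_p | use p in \<open>simp; fail\<close>)+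
      using B0e by (simp add: algebra_simps)
    show "t - s * inverse a * Bt R \<theta> (2 * ?E \<theta> a ptheta / a^2) = Tobs R t \<phi> \<theta> a ptheta" if "a \<in> {a. 0 < a * pphi}" for a
      using T_eq[OF R th _ q, of a] sgnP[of a] that by (simp add: s_def)
  qed
  have Tq: "((\<lambda>b. Tobs R t \<phi> \<theta> pphi b) has_real_derivative - (s * inverse pphi * (Bx * 0 + Bc * Cq))) (at ptheta)"
  proof (rule has_field_derivative_transform_within_open[OF _ oQ inQ])
    show "((\<lambda>b. t - s * inverse pphi * Bt R \<theta> (2 * ?E \<theta> pphi b / pphi^2)) has_real_derivative - (s * inverse pphi * (Bx * 0 + Bc * Cq))) (at ptheta)"
      by (auto intro!: derivative_eq_intros hB_q)
    show "t - s * inverse pphi * Bt R \<theta> (2 * ?E \<theta> pphi b / pphi^2) = Tobs R t \<phi> \<theta> pphi b" if "b \<in> {b. 0 < b * ptheta}" for b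
      using T_eq[OF R th p, of b] sgnQ[of b] that by (simp add: s_def)
  qed
  have Ephi: "((\<lambda>x. Eobs R t x \<theta> pphi ptheta) has_real_derivative 0) (at \<phi>)"
    by (simp add: Eobs_def)
  have Lphi: "((\<lambda>x. Lobs t x \<theta> pphi ptheta) has_real_derivative 0) (at \<phi>)"
    by (simp add: Lobs_def)
  have Lq: "((\<lambda>b. Lobs t \<phi> \<theta> pphi b) has_real_derivative 0) (at ptheta)"
    by (simp add: Lobs_def)
  have Lp: "((\<lambda>a. Lobs t \<phi> \<theta> a ptheta) has_real_derivative 1) (at pphi)"
    using Lobs_eq[OF snz] by simp
  have Lth: "((\<lambda>y. Lobs t \<phi> y pphi ptheta) has_real_derivative 0) (at \<theta>)"
  proof (rule has_field_derivative_transform_within_open[OF _ oS])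
    show "((\<lambda>y. pphi) has_real_derivative 0) (at \<theta>)" by simp
    show "\<theta> \<in> {0<..<pi}" using th by simp
    show "pphi = Lobs t \<phi> y pphi ptheta" if "y \<in> {0<..<pi}" for y
      using Lobs_eq[of y] that sin_gt_zero[of y] by force
  qed
  note dv = DERIV_imp_deriv[OF Ephi] DERIV_imp_deriv[OF hEth] DERIV_imp_deriv[OF hEp] DERIV_imp_deriv[OF hEq]
    DERIV_imp_deriv[OF Lphi] DERIV_imp_deriv[OF Lth] DERIV_imp_deriv[OF Lp] DERIV_imp_deriv[OF Lq]
    DERIV_imp_deriv[OF Thphi] DERIV_imp_deriv[OF Thth] DERIV_imp_deriv[OF Thp] DERIV_imp_deriv[OF Thq]
    DERIV_imp_deriv[OF Tphi] DERIV_imp_deriv[OF Tth] DERIV_imp_deriv[OF Tp] DERIV_imp_deriv[OF Tq]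
  have Csn: "C0 * sin \<theta> ^ 2 - 1 = ptheta^2 * sin \<theta> ^ 2 / (gmet R \<theta> * pphi^2)"
    unfolding C0_def E0v using snz g p by (simp add: field_simps)
  have sq: "sqrt (C0 * sin \<theta> ^ 2 - 1) = \<bar>ptheta\<bar> * sin \<theta> / (sqrt (gmet R \<theta>) * \<bar>pphi\<bar>)"
    unfolding Csn using sn g by (simp add: real_sqrt_divide real_sqrt_mult)
  have gg: "sqrt (gmet R \<theta>) * sqrt (gmet R \<theta>) = gmet R \<theta>" using g by simp
  have Axv: "Ax = gmet R \<theta> * \<bar>pphi\<bar> / (sin \<theta> ^ 2 * \<bar>ptheta\<bar>)"
    unfolding Ax_def fAn_def sq using sn g p q gg by (simp add: field_simps power2_eq_square)
  have Bxv: "Bx = gmet R \<theta> * \<bar>pphi\<bar> / \<bar>ptheta\<bar>"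
    unfolding Bx_def fBn_def sq using sn g p q gg by (simp add: field_simps power2_eq_square)
  have s2: "s * s = 1" unfolding s_def using p q by (simp add: sgn_if)
  have k1: "ptheta * s * Ax / gmet R \<theta> = pphi / sin \<theta> ^ 2"
    unfolding Axv s_def using p q g sn by (cases "pphi > 0"; cases "ptheta > 0") (auto simp: field_simps)
  have k2: "ptheta * s * inverse pphi * Bx / gmet R \<theta> = 1"
    unfolding Bxv s_def using p q g sn by (cases "pphi > 0"; cases "ptheta > 0") (auto simp: field_simps)
  have kA: "Ax * Cq = 2 * s / (sin \<theta> ^ 2 * pphi)"
    unfolding Axv Cq_def s_def using p q g sn by (cases "pphi > 0"; cases "ptheta > 0") (auto simp: field_simps power2_eq_square)
  have kB: "Cq * Bx = 2 * s / pphi"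
    unfolding Bxv Cq_def s_def using p q g sn by (cases "pphi > 0"; cases "ptheta > 0") (auto simp: field_simps power2_eq_square)
  have kp: "pphi * Cp = 2 / sin \<theta> ^ 2 - 2 * C0"
    unfolding Cp_def C0_def using p sn by (simp add: field_simps power2_eq_square)
  have kc: "ptheta * Cth / gmet R \<theta> = Eth * Cq"
    unfolding Cth_def Cq_def by (simp add: field_simps)
  have g1: "- (pphi / (sin \<theta>)\<^sup>2) - Eth * (s * (Ac * Cq)) + ptheta * (s * (Ax + Ac * Cth)) / gmet R \<theta> = 0"
  proof -
    have "ptheta * (s * (Ax + Ac * Cth)) / gmet R \<theta> = ptheta * s * Ax / gmet R \<theta> + s * Ac * (ptheta * Cth / gmet R \<theta>)"
      using g by (simp add: field_simps)
    then show ?thesis unfolding k1 kc by (simp add: algebra_simps)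
  qed
  have g2: "ptheta * (s * inverse pphi * (Bx + Bc * Cth)) / gmet R \<theta> - Eth * (s * inverse pphi * (Bc * Cq)) = 1"
  proof -
    have "ptheta * (s * inverse pphi * (Bx + Bc * Cth)) / gmet R \<theta> = ptheta * s * inverse pphi * Bx / gmet R \<theta> + s * inverse pphi * Bc * (ptheta * Cth / gmet R \<theta>)"
      using g p by (simp add: field_simps)
    then show ?thesis unfolding k2 kc by (simp add: algebra_simps)
  qed
  have g3: "s * (Ax + Ac * Cth) * (s * inverse pphi * (Bc * Cq)) - s * (inverse pphi * (Bc * Cp) - inverse pphi * inverse pphi * B0) =
     s * (Ac * Cq) * (s * inverse pphi * (Bx + Bc * Cth))"
  proof -
    have "s * (Ax + Ac * Cth) * (s * inverse pphi * (Bc * Cq)) - s * (inverse pphi * (Bc * Cp) - inverse pphi * inverse pphi * B0)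
       - s * (Ac * Cq) * (s * inverse pphi * (Bx + Bc * Cth))
       = (s * s) * inverse pphi * (Bc * (Ax * Cq) - Ac * (Cq * Bx)) - s * inverse pphi * inverse pphi * (Bc * (pphi * Cp) - B0)"
      using p by (simp add: field_simps)
    also have "\<dots> = s * inverse pphi * inverse pphi * (B0 - 2 * (Ac - C0 * Bc))"
      unfolding s2 kA kB kp using p sn by (simp add: field_simps)
    also have "\<dots> = 0" using idt unfolding B0_def Ac_def Bc_def by simp
    finally show ?thesis by simp
  qed
  show ?thesis
    unfolding poisson_def d_phi_def d_theta_def d_pphi_def d_ptheta_def dv
    using g1 g2 g3 by simp
qed

end
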